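(* Let $\omega\in\mathbb{R}$ and let $u\in W(\mathbb{R}^+)\cap C^2(\mathbb{R}^+)$ be a non-trivial classical solution of $-\partial_x^2u+\omega u-u\log|u|^2=0$ on $\mathbb{R}^+=(0,\infty)$. Then there exist $\theta\in\mathbb{R}$ and $c\in\mathbb{R}$ such that $u(x)=e^{i\theta}e^{\frac{\omega+1}{2}}e^{-\frac12(x+c)^2}$ for all $x\in\mathbb{R}^+$.
   Context: $W(\mathbb{R}^+)=\{u\in H^1(\mathbb{R}^+;\mathbb{C}):|u|^2\log|u|^2\in L^1(\mathbb{R}^+)\}$. *)

theory Defs
  imports "HOL-Analysis.Analysis"
begin

definition L2_pos :: "(real \<Rightarrow> complex) \<Rightarrow> bool" where
  "L2_pos f \<longleftrightarrow> set_borel_measurable lborel {0<..} f \<and>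
     set_integrable lborel {0<..} (\<lambda>x. (cmod (f x))\<^sup>2)"

definition test_fun_pos :: "(real \<Rightarrow> real) \<Rightarrow> bool" where
  "test_fun_pos \<phi> \<longleftrightarrow> (\<forall>n. ((deriv ^^ n) \<phi>) differentiable_on UNIV) \<and>
     (\<exists>a b. 0 < a \<and> a < b \<and> (\<forall>x. x \<notin> {a..b} \<longrightarrow> \<phi> x = 0))"

definition H1_pos :: "(real \<Rightarrow> complex) \<Rightarrow> bool" where
  "H1_pos u \<longleftrightarrow> L2_pos u \<and>
     (\<exists>g. L2_pos g \<and> (\<forall>\<phi>. test_fun_pos \<phi> \<longrightarrow>
        (LINT x:{0<..}|lborel. u x * complex_of_real (deriv \<phi> x)) =
        - (LINT x:{0<..}|lborel. g x * complex_of_real (\<phi> x))))"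

text \<open>W(R+) = {u in H^1 : |u|^2 log |u|^2 in L^1}; note ln 0 = 0 in Isabelle, matching 0 log 0 = 0.\<close>
definition W_pos :: "(real \<Rightarrow> complex) \<Rightarrow> bool" where
  "W_pos u \<longleftrightarrow> H1_pos u \<and>
     set_integrable lborel {0<..} (\<lambda>x. (cmod (u x))\<^sup>2 * ln ((cmod (u x))\<^sup>2))"

definition C2_on :: "real set \<Rightarrow> (real \<Rightarrow> complex) \<Rightarrow> bool" where
  "C2_on S u \<longleftrightarrow> (\<forall>x\<in>S. u differentiable at x) \<and>
     (\<forall>x\<in>S. (\<lambda>t. vector_derivative u (at t)) differentiable at x) \<and>
     continuous_on S (\<lambda>t. vector_derivative (\<lambda>s. vector_derivative u (at s)) (at t))"

end

theory Submission
  imports Defs "HOL-Real_Asymp.Real_Asymp"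
begin


lemma xlnx_bound:
  fixes f :: real assumes "0 \<le> f" "f \<le> 1"
  shows "\<bar>f * ln f\<bar> \<le> 4 * f powr (3/4)"
proof (cases "f = 0")
  case True then show ?thesis by simp
next
  case False
  then have fp: "f > 0" using assms by simp
  have "ln (f powr (-1/4)) \<le> f powr (-1/4) - 1"
    using fp by (intro ln_le_minus_one) simp
  also have "ln (f powr (-1/4)) = (-1/4) * ln f" using fp by (simp add: ln_powr)
  finally have "- ln f \<le> 4 * f powr (-1/4)" by simp
  then have "f * (- ln f) \<le> f * (4 * f powr (-1/4))" using fp by (intro mult_left_mono) auto
  also have "f * (4 * f powr (-1/4)) = 4 * f powr (3/4)"
    using fp by (simp add: powr_add[symmetric] powr_mult_base) 
  finally have "- (f * ln f) \<le> 4 * f powr (3/4)" by simp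
  moreover have "ln f \<le> 0" using fp assms by simp
  then have "f * ln f \<le> 0" using fp by (simp add: mult_nonneg_nonpos)
  ultimately show ?thesis by linarith
qed

lemma xlnx_deriv0:
  fixes f :: "real \<Rightarrow> real"
  assumes f0: "f x = 0" and nn: "\<And>y. f y \<ge> 0" and K: "K > 0"
    and bd: "eventually (\<lambda>y. f y \<le> K * (y - x)^2) (at x)"
  shows "((\<lambda>y. f y * ln (f y)) has_real_derivative 0) (at x)"
proof -
  have lim0: "((\<lambda>y. K * (y - x)^2) \<longlongrightarrow> 0) (at x)"
    by (auto intro!: tendsto_eq_intros)
  then have ev1: "eventually (\<lambda>y. K * (y - x)^2 < 1) (at x)"
    by (rule order_tendstoD) simp
  have "((\<lambda>y. 4 * ((K*(y-x)^2) powr (3/4) / \<bar>y-x\<bar>)) \<longlongrightarrow> 4 * 0) (at x)"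
    by (intro tendsto_mult tendsto_const) (use K in real_asymp)
  then have lim: "((\<lambda>y. 4 * ((K*(y-x)^2) powr (3/4) / \<bar>y-x\<bar>)) \<longlongrightarrow> 0) (at x)" by simp
  have "((\<lambda>y. (f y * ln (f y) - f x * ln (f x)) / (y - x)) \<longlongrightarrow> 0) (at x)"
  proof (rule Lim_null_comparison[OF _ lim])
    show "eventually (\<lambda>y. norm ((f y * ln (f y) - f x * ln (f x)) / (y - x))
        \<le> 4 * ((K*(y-x)^2) powr (3/4) / \<bar>y-x\<bar>)) (at x)"
      using bd ev1 eventually_neq_at_within[of x x UNIV]
    proof eventually_elim
      case (elim y)
      then have yx: "y \<noteq> x" by simp
      have f1: "f y \<le> 1" using elim by linarith
      have "\<bar>f y * ln (f y)\<bar> \<le> 4 * f y powr (3/4)" by (rule xlnx_bound[OF nn f1])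
      also have "\<dots> \<le> 4 * (K*(y-x)^2) powr (3/4)"
        using elim(1) nn[of y] by (auto intro!: powr_mono2)
      finally have "\<bar>f y * ln (f y)\<bar> / \<bar>y - x\<bar> \<le> 4 * (K*(y-x)^2) powr (3/4) / \<bar>y - x\<bar>"
        using yx by (intro divide_right_mono) auto
      then show ?case using f0 by (simp add: abs_divide)
    qed
  qed
  then show ?thesis using has_field_derivative_iff by blast
qed


lemma deriv_sq_bound:
  fixes g :: "real \<Rightarrow> real"
  assumes "(g has_real_derivative d) (at x)" "g x = 0"
  shows "eventually (\<lambda>y. g y ^ 2 \<le> (\<bar>d\<bar> + 1)^2 * (y - x)^2) (at x)"
proof -
  have "((\<lambda>y. (g y - g x) / (y - x)) \<longlongrightarrow> d) (at x)"
    using assms(1) has_field_derivative_iff by blast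
  then have "eventually (\<lambda>y. dist ((g y - g x) / (y - x)) d < 1) (at x)"
    by (rule tendstoD) simp
  then show ?thesis using eventually_neq_at_within[of x x UNIV]
  proof eventually_elim
    case (elim y)
    then have "\<bar>g y / (y - x) - d\<bar> < 1" using assms(2) by (auto simp: dist_real_def)
    then have "\<bar>g y / (y - x)\<bar> \<le> \<bar>d\<bar> + 1" by linarith
    then have "\<bar>g y\<bar> \<le> (\<bar>d\<bar> + 1) * \<bar>y - x\<bar>" using elim(2)
      by (simp add: abs_divide divide_le_eq)
    then have "\<bar>g y\<bar>^2 \<le> ((\<bar>d\<bar> + 1) * \<bar>y - x\<bar>)^2" by (intro power_mono) auto
    then show ?case by (simp add: power_mult_distrib)
  qed
qed

lemma tlnt_lim: "((\<lambda>t::real. t * ln t) \<longlongrightarrow> 0) (at_right 0)" by real_asymp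
lemma tlnt_small: "(\<eta>::real) > 0 \<Longrightarrow> \<exists>\<delta>>0. \<forall>t. 0 \<le> t \<and> t < \<delta> \<longrightarrow> \<bar>t * ln t\<bar> < \<eta>"
proof -
  assume eta: "\<eta> > 0"
  have "eventually (\<lambda>t::real. dist (t * ln t) 0 < \<eta>) (at_right 0)"
    using tendstoD[OF tlnt_lim eta] .
  then have "\<exists>b>0. \<forall>y::real>0. y < b \<longrightarrow> dist (y * ln y) 0 < \<eta>"
    unfolding eventually_at_right_field .
  then obtain d where d: "d > 0" "\<And>y. y > 0 \<Longrightarrow> y < d \<Longrightarrow> \<bar>y * ln y\<bar> < \<eta>"
    by (auto simp: dist_real_def)
  have "\<forall>t. 0 \<le> t \<and> t < d \<longrightarrow> \<bar>t * ln t\<bar> < \<eta>"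
  proof (intro allI impI)
    fix t :: real assume t: "0 \<le> t \<and> t < d"
    show "\<bar>t * ln t\<bar> < \<eta>"
    proof (cases "t = 0")
      case True then show ?thesis using eta by simp
    next
      case False then show ?thesis using t d(2)[of t] by simp
    qed
  qed
  then show ?thesis using d(1) by blast
qed

locale sol =
  fixes a b a1 b1 a2 b2 :: "real \<Rightarrow> real" and \<omega> :: real
  assumes da: "\<And>x. x > 0 \<Longrightarrow> (a has_real_derivative a1 x) (at x)"
    and db: "\<And>x. x > 0 \<Longrightarrow> (b has_real_derivative b1 x) (at x)"
    and da1: "\<And>x. x > 0 \<Longrightarrow> (a1 has_real_derivative a2 x) (at x)"
    and db1: "\<And>x. x > 0 \<Longrightarrow> (b1 has_real_derivative b2 x) (at x)"
    and ea: "\<And>x. x > 0 \<Longrightarrow> a2 x = (\<omega> - ln (a x ^ 2 + b x ^ 2)) * a x"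
    and eb: "\<And>x. x > 0 \<Longrightarrow> b2 x = (\<omega> - ln (a x ^ 2 + b x ^ 2)) * b x"
    and int: "set_integrable lborel {0<..} (\<lambda>x. a x ^ 2 + b x ^ 2)"
    and nz: "\<exists>x>0. a x ^ 2 + b x ^ 2 > 0"
begin

definition "s x = a x ^ 2 + b x ^ 2"
definition "s1 x = 2 * (a x * a1 x + b x * b1 x)"
definition "P x = a1 x ^ 2 + b1 x ^ 2"
definition "J x = a x * b1 x - b x * a1 x"
definition "F t = (\<omega> + 1) * t - t * ln t"
definition "En x = P x - F (s x)"

lemma s_nonneg: "s x \<ge> 0" by (simp add: s_def)

lemma ds: "x > 0 \<Longrightarrow> (s has_real_derivative s1 x) (at x)"
  unfolding s_def[abs_def] s1_def
  by (auto intro!: derivative_eq_intros da db simp: algebra_simps)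

lemma ds1: "x > 0 \<Longrightarrow> (s1 has_real_derivative 2 * P x + 2 * (\<omega> - ln (s x)) * s x) (at x)"
  unfolding s1_def[abs_def]
  apply (rule derivative_eq_intros da db da1 db1 refl | assumption)+
  by (simp add: ea eb P_def s_def algebra_simps power2_eq_square)

lemma dJ: "x > 0 \<Longrightarrow> (J has_real_derivative 0) (at x)"
  unfolding J_def[abs_def]
  apply (rule derivative_eq_intros da db da1 db1 refl | assumption)+
  by (simp add: ea eb algebra_simps)

lemma dP: "x > 0 \<Longrightarrow> (P has_real_derivative (\<omega> - ln (s x)) * s1 x) (at x)"
  unfolding P_def[abs_def]
  apply (rule derivative_eq_intros da db da1 db1 refl | assumption)+
  by (simp add: ea eb s1_def s_def algebra_simps)

lemma cont_s: "continuous_on {0<..} s"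
  using ds by (meson DERIV_isCont continuous_at_imp_continuous_on greaterThan_iff)

lemma dF: assumes x: "x > 0" shows "((\<lambda>y. F (s y)) has_real_derivative (\<omega> - ln (s x)) * s1 x) (at x)"
proof (cases "s x > 0")
  case True
  have L: "((\<lambda>y. ln (s y)) has_real_derivative inverse (s x) * s1 x) (at x)"
    using DERIV_chain2[OF DERIV_ln[OF True] ds[OF x]] .
  have "((\<lambda>y. (\<omega>+1) * s y - s y * ln (s y)) has_real_derivative
      (\<omega>+1) * s1 x - (s1 x * ln (s x) + inverse (s x) * s1 x * s x)) (at x)"
    by (intro DERIV_diff DERIV_cmult DERIV_mult[OF ds[OF x] L] ds x)
  then show ?thesis unfolding F_def using True by (simp add: field_simps)
next
  case False
  then have s0: "s x = 0" using s_nonneg[of x] by linarith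
  then have ab0: "a x = 0" "b x = 0" unfolding s_def by (auto simp: add_nonneg_eq_0_iff)
  then have s10: "s1 x = 0" by (simp add: s1_def)
  have evb: "eventually (\<lambda>y. s y \<le> ((\<bar>a1 x\<bar> + 1)^2 + (\<bar>b1 x\<bar> + 1)^2) * (y - x)^2) (at x)"
    using deriv_sq_bound[OF da[OF x] ab0(1)] deriv_sq_bound[OF db[OF x] ab0(2)]
    by eventually_elim (simp add: s_def algebra_simps)
  have Z: "((\<lambda>y. s y * ln (s y)) has_real_derivative 0) (at x)"
    by (rule xlnx_deriv0[OF s0 s_nonneg _ evb]) (simp add: add_pos_pos)
  have "((\<lambda>y. (\<omega> + 1) * s y - s y * ln (s y)) has_real_derivative (\<omega> + 1) * s1 x - 0) (at x)"
    by (intro DERIV_diff DERIV_cmult ds x Z)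
  then show ?thesis by (simp add: F_def s10)
qed

lemma dEn: "x > 0 \<Longrightarrow> (En has_real_derivative 0) (at x)"
  unfolding En_def[abs_def] using DERIV_diff[OF dP dF] by simp

lemma J_const: "\<exists>c. \<forall>x>0. J x = c"
proof -
  have "\<exists>c. \<forall>x\<in>{0<..}. J x = c"
    by (rule has_field_derivative_zero_constant) (auto intro: has_field_derivative_at_within dJ)
  then show ?thesis by auto
qed

lemma En_const: "\<exists>c. \<forall>x>0. En x = c"
proof -
  have "\<exists>c. \<forall>x\<in>{0<..}. En x = c"
    by (rule has_field_derivative_zero_constant) (auto intro: has_field_derivative_at_within dEn)
  then show ?thesis by auto
qed

lemma F_upper: "t \<ge> 0 \<Longrightarrow> F t \<le> \<bar>\<omega> + 1\<bar> * t + 1"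
proof -
  assume t: "t \<ge> 0"
  have "- (t * ln t) \<le> 1"
  proof (cases "t = 0")
    case False
    then have tp: "t > 0" using t by simp
    have "ln (1/t) \<le> 1/t - 1" using tp by (intro ln_le_minus_one) simp
    then have "- ln t \<le> 1/t - 1" using tp by (simp add: ln_div)
    then have "t * (- ln t) \<le> t * (1/t - 1)" using tp by (intro mult_left_mono) auto
    moreover have "t * (1/t - 1) = 1 - t" using tp by (simp add: field_simps)
    ultimately show ?thesis using tp by simp
  qed simp
  moreover have "(\<omega> + 1) * t \<le> \<bar>\<omega> + 1\<bar> * t" using t by (intro mult_right_mono) auto
  ultimately show ?thesis unfolding F_def by linarith
qed

lemma lagrange: "J x ^ 2 + (s1 x / 2) ^ 2 = s x * P x"
  unfolding J_def s1_def s_def P_def by algebra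

lemma s1_bound: "\<bar>s1 x\<bar> \<le> s x + P x"
proof -
  have "(a x - a1 x)^2 + (b x - b1 x)^2 = s x + P x - s1 x"
    by (simp add: s_def P_def s1_def power2_eq_square algebra_simps)
  moreover have "(a x + a1 x)^2 + (b x + b1 x)^2 = s x + P x + s1 x"
    by (simp add: s_def P_def s1_def power2_eq_square algebra_simps)
  moreover have "0 \<le> (a x - a1 x)^2 + (b x - b1 x)^2" "0 \<le> (a x + a1 x)^2 + (b x + b1 x)^2" by simp_all
  ultimately show ?thesis by linarith
qed

lemma P_nonneg: "P x \<ge> 0" by (simp add: P_def)

end
context sol begin

definition "E0 = En 1"
definition "J0 = J 1"
lemma En_eq: "x > 0 \<Longrightarrow> En x = E0"
  using En_const unfolding E0_def by (metis zero_less_one)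
lemma J_eq: "x > 0 \<Longrightarrow> J x = J0"
  using J_const unfolding J0_def by (metis zero_less_one)
lemma P_eq: "x > 0 \<Longrightarrow> P x = E0 + F (s x)"
proof -
  assume "x > 0"
  then have "P x - F (s x) = E0" using En_eq[of x] by (simp add: En_def)
  then show ?thesis by linarith
qed

definition "Smax = max (exp (\<omega> + 2)) (\<bar>E0\<bar> + 1)"
lemma Smax_pos: "Smax > 0" unfolding Smax_def by (smt (verit) abs_ge_zero exp_gt_zero max.cobounded1)

lemma s_bound: assumes x: "x > 0" shows "s x \<le> Smax"
proof (rule ccontr)
  assume "\<not> s x \<le> Smax"
  then have gt: "s x > exp (\<omega> + 2)" "s x > \<bar>E0\<bar> + 1" by (auto simp: Smax_def)
  then have sp: "s x > 0" by (meson exp_gt_zero less_trans)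
  have "ln (exp (\<omega> + 2)) < ln (s x)" using gt sp by (subst ln_less_cancel_iff) auto
  then have l: "\<omega> + 1 - ln (s x) < -1" by simp
  have "F (s x) = s x * (\<omega> + 1 - ln (s x))" by (simp add: F_def algebra_simps)
  also have "\<dots> < s x * (-1)" using l sp by (intro mult_strict_left_mono) auto
  finally have "F (s x) < - s x" by simp
  moreover have "F (s x) \<ge> - E0" using P_eq[OF x] P_nonneg[of x] by linarith
  ultimately show False using gt by linarith
qed

definition "Pmax = \<bar>E0\<bar> + \<bar>\<omega> + 1\<bar> * Smax + 1"
lemma P_bound: assumes x: "x > 0" shows "P x \<le> Pmax"
proof -
  have "F (s x) \<le> \<bar>\<omega> + 1\<bar> * s x + 1" by (rule F_upper[OF s_nonneg])
  also have "\<bar>\<omega> + 1\<bar> * s x \<le> \<bar>\<omega> + 1\<bar> * Smax" by (intro mult_left_mono s_bound x) auto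
  finally show ?thesis using P_eq[OF x] unfolding Pmax_def by linarith
qed

definition "K = Smax + Pmax + 1"
lemma K_pos: "K > 0" unfolding K_def Pmax_def using Smax_pos by (simp add: add_pos_nonneg)
lemma s1_K: "x > 0 \<Longrightarrow> \<bar>s1 x\<bar> \<le> K"
  using s1_bound[of x] s_bound[of x] P_bound[of x] unfolding K_def by linarith

lemma s_lip: assumes "0 < x" "x \<le> y" shows "s y \<ge> s x - K * (y - x)"
proof -
  have "s x + K * x \<le> s y + K * y"
  proof (rule DERIV_nonneg_imp_nondecreasing[OF assms(2)])
    fix t assume t: "x \<le> t" "t \<le> y"
    then have tp: "t > 0" using assms by linarith
    show "\<exists>d. ((\<lambda>t. s t + K * t) has_real_derivative d) (at t) \<and> d \<ge> 0"
      using s1_K[OF tp] by (intro exI[of _ "s1 t + K"] conjI DERIV_add ds tp DERIV_cmult_right DERIV_ident[THEN DERIV_cmult, where c=K, simplified]) auto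
  qed
  then show ?thesis by (simp add: algebra_simps)
qed

lemma shift_at_top: "filterlim (\<lambda>x::real. x + h) at_top at_top"
proof -
  have "filterlim (\<lambda>x::real. h + x) at_top at_top"
    by (rule filterlim_tendsto_add_at_top[OF tendsto_const filterlim_ident])
  then show ?thesis by (simp add: add.commute)
qed

lemma s_to_0: assumes eps: "(\<epsilon>::real) > 0" shows "\<exists>X. \<forall>x\<ge>X. s x < \<epsilon>"
proof (rule ccontr)
  assume "\<not> (\<exists>X. \<forall>x\<ge>X. s x < \<epsilon>)"
  then have H: "\<forall>X. \<exists>x\<ge>X. s x \<ge> \<epsilon>" by (auto simp: not_less)
  define h where "h = \<epsilon> / (2 * K)"
  have hp: "h > 0" using eps K_pos by (simp add: h_def)
  have Kh: "K * h = \<epsilon> / 2" using K_pos by (simp add: h_def)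
  have intS: "set_integrable lborel {0<..} s" using int unfolding s_def[abs_def] .
  have i1: "set_integrable lborel {1..} s" by (rule set_integrable_subset[OF intS]) auto
  have lim: "((\<lambda>b. set_lebesgue_integral lborel {1..b} s) \<longlongrightarrow> set_lebesgue_integral lborel {1..} s) at_top"
    by (rule tendsto_set_lebesgue_integral_at_top[OF _ i1]) auto
  define L where "L = set_lebesgue_integral lborel {1..} s"
  define I where "I b = integral {1..b} s" for b
  have "eventually (\<lambda>b. set_lebesgue_integral lborel {1..b} s = I b) at_top"
    using eventually_ge_at_top[of "1::real"]
  proof eventually_elim
    case (elim b)
    have "set_integrable lborel {1..b} s" by (rule set_integrable_subset[OF intS]) auto
    then show ?case unfolding I_def by (rule set_borel_integral_eq_integral(2))
  qed
  then have limI: "(I \<longlongrightarrow> L) at_top" using lim unfolding L_def by (rule tendsto_cong[THEN iffD1])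
  have "((\<lambda>x. I (x + h) - I x) \<longlongrightarrow> L - L) at_top"
    by (intro tendsto_diff filterlim_compose[OF limI shift_at_top] limI)
  then have "eventually (\<lambda>x. dist (I (x + h) - I x) 0 < h * \<epsilon> / 2) at_top"
    using hp eps by (intro tendstoD) auto
  then obtain X where X: "\<And>x. x \<ge> X \<Longrightarrow> \<bar>I (x + h) - I x\<bar> < h * \<epsilon> / 2"
    by (auto simp: eventually_at_top_linorder dist_real_def)
  obtain x where x: "x \<ge> max X 1" "s x \<ge> \<epsilon>" using H by blast
  have x1: "x \<ge> 1" "x \<ge> X" using x by auto
  have cont: "continuous_on {1..x+h} s" by (rule continuous_on_subset[OF cont_s]) auto
  have "I x + integral {x..x+h} s = I (x + h)" unfolding I_def
    using x1 hp by (intro Henstock_Kurzweil_Integration.integral_combine integrable_continuous_real cont) auto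
  moreover have "integral {x..x+h} (\<lambda>_. \<epsilon> / 2) \<le> integral {x..x+h} s"
  proof (rule integral_le)
    show "(\<lambda>_. \<epsilon> / 2) integrable_on {x..x+h}" by (rule integrable_const_ivl)
    show "s integrable_on {x..x+h}"
      by (intro integrable_continuous_real continuous_on_subset[OF cont_s]) (use x1 in auto)
    fix y assume y: "y \<in> {x..x+h}"
    have "s y \<ge> s x - K * (y - x)" using y x1 by (intro s_lip) auto
    moreover have "K * (y - x) \<le> K * h" using y K_pos by (intro mult_left_mono) auto
    ultimately show "\<epsilon> / 2 \<le> s y" using x(2) Kh by linarith
  qed
  moreover have "integral {x..x+h} (\<lambda>_. \<epsilon> / 2) = h * \<epsilon> / 2" using hp by simp
  ultimately have "I (x + h) - I x \<ge> h * \<epsilon> / 2" by linarith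
  with X[OF x1(2)] show False by linarith
qed

lemma small: assumes eta: "(\<eta>::real) > 0"
  shows "\<exists>X. \<forall>x\<ge>X. (\<bar>\<omega>\<bar> + \<bar>\<omega> + 1\<bar> + 1) * s x < \<eta> \<and> \<bar>s x * ln (s x)\<bar> < \<eta>"
proof -
  define C where "C = \<bar>\<omega>\<bar> + \<bar>\<omega> + 1\<bar> + 1"
  have C: "C > 0" unfolding C_def by (simp add: add_nonneg_pos)
  obtain d where d: "d > 0" "\<forall>t. 0 \<le> t \<and> t < d \<longrightarrow> \<bar>t * ln t\<bar> < \<eta>" using tlnt_small[OF eta] by blast
  obtain X1 where X1: "\<forall>x\<ge>X1. s x < \<eta> / C" using s_to_0[of "\<eta> / C"] eta C by auto
  obtain X2 where X2: "\<forall>x\<ge>X2. s x < d" using s_to_0[OF d(1)] by auto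
  show ?thesis
  proof (intro exI[of _ "max X1 X2"] allI impI conjI)
    fix x assume x: "max X1 X2 \<le> x"
    then have "s x < \<eta> / C" using X1 by auto
    then show "(\<bar>\<omega>\<bar> + \<bar>\<omega> + 1\<bar> + 1) * s x < \<eta>" using C unfolding C_def[symmetric]
      by (simp add: field_simps mult.commute)
    show "\<bar>s x * ln (s x)\<bar> < \<eta>" using x X2 d(2) s_nonneg[of x] by auto
  qed
qed

lemma E0_zero: "E0 = 0"
proof (rule ccontr)
  assume ne: "E0 \<noteq> 0"
  show False
  proof (cases "E0 < 0")
    case True
    obtain X where X: "\<forall>x\<ge>X. (\<bar>\<omega>\<bar> + \<bar>\<omega> + 1\<bar> + 1) * s x < - E0 / 2 \<and> \<bar>s x * ln (s x)\<bar> < - E0 / 2"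
      using small[of "- E0 / 2"] True by auto
    define x where "x = max X 1"
    have xp: "x > 0" "x \<ge> X" by (auto simp: x_def)
    have A: "(\<bar>\<omega>\<bar> + \<bar>\<omega> + 1\<bar> + 1) * s x < - E0 / 2" "\<bar>s x * ln (s x)\<bar> < - E0 / 2" using X xp by auto
    have "(\<omega> + 1) * s x \<le> (\<bar>\<omega>\<bar> + \<bar>\<omega> + 1\<bar> + 1) * s x"
      using s_nonneg[of x] by (intro mult_right_mono) auto
    then have "F (s x) < - E0" using A unfolding F_def by linarith
    moreover have "F (s x) \<ge> - E0" using P_eq[OF xp(1)] P_nonneg[of x] by linarith
    ultimately show False by linarith
  next
    case False
    then have E: "E0 > 0" using ne by linarith
    obtain X where X: "\<forall>x\<ge>X. (\<bar>\<omega>\<bar> + \<bar>\<omega> + 1\<bar> + 1) * s x < E0 / 8 \<and> \<bar>s x * ln (s x)\<bar> < E0 / 8"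
      using small[of "E0 / 8"] E by auto
    define X1 where "X1 = max X 1"
    have X1: "X1 > 0" "X1 \<ge> X" by (auto simp: X1_def)
    define T where "T = (2 * K + 1) / E0"
    have T: "T > 0" "E0 * T = 2 * K + 1" using E K_pos by (auto simp: T_def)
    have "s1 X1 - E0 * X1 \<le> s1 (X1 + T) - E0 * (X1 + T)"
    proof (rule DERIV_nonneg_imp_nondecreasing[where f="\<lambda>t. s1 t - E0 * t"])
      show "X1 \<le> X1 + T" using T by simp
      fix t assume t: "X1 \<le> t" "t \<le> X1 + T"
      then have tp: "t > 0" "t \<ge> X" using X1 by auto
      have A: "(\<bar>\<omega>\<bar> + \<bar>\<omega> + 1\<bar> + 1) * s t < E0 / 8" "\<bar>s t * ln (s t)\<bar> < E0 / 8" using X tp by auto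
      have B1: "\<bar>(\<omega> + 1) * s t\<bar> \<le> (\<bar>\<omega>\<bar> + \<bar>\<omega> + 1\<bar> + 1) * s t"
        using s_nonneg[of t] by (simp add: abs_mult mult_right_mono)
      have B2: "\<bar>\<omega> * s t\<bar> \<le> (\<bar>\<omega>\<bar> + \<bar>\<omega> + 1\<bar> + 1) * s t"
        using s_nonneg[of t] by (simp add: abs_mult mult_right_mono)
      have eq: "2 * P t + 2 * (\<omega> - ln (s t)) * s t - E0
          = E0 + 2 * ((\<omega> + 1) * s t) + 2 * (\<omega> * s t) - 4 * (s t * ln (s t))"
        using P_eq[OF tp(1)] by (simp add: F_def algebra_simps)
      have "2 * P t + 2 * (\<omega> - ln (s t)) * s t - E0 \<ge> 0"
        unfolding eq using A B1 B2 E unfolding abs_le_iff abs_less_iff by linarith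
      then show "\<exists>y. ((\<lambda>t. s1 t - E0 * t) has_real_derivative y) (at t) \<and> 0 \<le> y"
        by (intro exI[of _ "2 * P t + 2 * (\<omega> - ln (s t)) * s t - E0"] conjI
              DERIV_diff ds1 tp DERIV_cmult_right DERIV_ident[THEN DERIV_cmult, where c=E0, simplified]) auto
    qed
    then have "s1 (X1 + T) \<ge> s1 X1 + (2 * K + 1)" using T by (simp add: algebra_simps)
    moreover have "\<bar>s1 X1\<bar> \<le> K" "\<bar>s1 (X1 + T)\<bar> \<le> K" using s1_K X1 T by auto
    ultimately show False by linarith
  qed
qed

lemma Pmax_pos: "Pmax > 0" unfolding Pmax_def using Smax_pos by (simp add: add_nonneg_pos)

lemma J0_zero: "J0 = 0"
proof (rule ccontr)
  assume ne: "J0 \<noteq> 0"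
  then have jp: "J0^2 / Pmax > 0" using Pmax_pos by simp
  obtain X where X: "\<forall>x\<ge>X. s x < J0^2 / Pmax" using s_to_0[OF jp] by blast
  define x where "x = max X 1"
  have xp: "x > 0" "x \<ge> X" by (auto simp: x_def)
  have "s x * Pmax < J0^2" using X xp Pmax_pos by (simp add: field_simps)
  moreover have "J0^2 \<le> s x * P x" using lagrange[of x] J_eq[OF xp(1)] by (smt (verit) zero_le_power2)
  moreover have "s x * P x \<le> s x * Pmax" by (intro mult_left_mono P_bound xp s_nonneg)
  ultimately show False by linarith
qed

lemma P_F: "x > 0 \<Longrightarrow> P x = F (s x)" using P_eq E0_zero by simp
lemma s1_sq: "x > 0 \<Longrightarrow> s1 x ^ 2 = 4 * s x * P x"
  using lagrange[of x] J_eq[of x] J0_zero by (simp add: power_divide)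

lemma dL1: assumes x: "x > 0" and sp: "s x > 0"
  shows "((\<lambda>y. s1 y / s y) has_real_derivative -2) (at x)"
proof -
  have "((\<lambda>y. s1 y / s y) has_real_derivative
     ((2 * P x + 2 * (\<omega> - ln (s x)) * s x) * s x - s1 x * s1 x) / (s x)^2) (at x)"
    using DERIV_divide[OF ds1[OF x] ds[OF x]] sp by (simp add: power2_eq_square)
  moreover have "((2 * P x + 2 * (\<omega> - ln (s x)) * s x) * s x - s1 x * s1 x) = -2 * (s x)^2"
  proof -
    have e1: "s1 x * s1 x = 4 * s x * P x" using s1_sq[OF x] by (simp add: power2_eq_square)
    have e2: "P x = (\<omega> + 1) * s x - s x * ln (s x)" using P_F[OF x] by (simp add: F_def)
    show ?thesis unfolding e1 unfolding e2 by (simp add: power2_eq_square algebra_simps)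
  qed
  ultimately show ?thesis using sp by simp
qed

lemma Q: assumes I: "open I" "convex I" "I \<subseteq> {0<..}" and pos: "\<And>y. y \<in> I \<Longrightarrow> s y > 0"
  shows "\<exists>\<alpha> \<beta>. \<forall>x\<in>I. s1 x / s x = \<alpha> - 2 * x \<and> ln (s x) = \<beta> + \<alpha> * x - x^2"
proof -
  have "\<exists>c. \<forall>x\<in>I. s1 x / s x + 2 * x = c"
  proof (rule has_field_derivative_zero_constant[OF I(2)])
    fix x assume xI: "x \<in> I"
    then have x: "x > 0" using I by auto
    have "((\<lambda>y. s1 y / s y + 2 * y) has_real_derivative -2 + 2) (at x)"
      by (intro DERIV_add dL1 x pos xI) (auto intro!: derivative_eq_intros)
    then show "((\<lambda>y. s1 y / s y + 2 * y) has_real_derivative 0) (at x within I)"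
      by (simp add: has_field_derivative_at_within)
  qed
  then obtain \<alpha> where al: "\<And>x. x \<in> I \<Longrightarrow> s1 x / s x + 2 * x = \<alpha>" by blast
  have "\<exists>c. \<forall>x\<in>I. ln (s x) + x^2 - \<alpha> * x = c"
  proof (rule has_field_derivative_zero_constant[OF I(2)])
    fix x assume xI: "x \<in> I"
    then have x: "x > 0" using I by auto
    have L: "((\<lambda>y. ln (s y)) has_real_derivative inverse (s x) * s1 x) (at x)"
      using DERIV_chain2[OF DERIV_ln[OF pos[OF xI]] ds[OF x]] .
    have "((\<lambda>y. ln (s y) + y^2 - \<alpha> * y) has_real_derivative inverse (s x) * s1 x + 2 * x - \<alpha>) (at x)"
      by (rule derivative_eq_intros L refl)+ simp
    moreover have "inverse (s x) * s1 x + 2 * x - \<alpha> = 0" using al[OF xI] by (simp add: field_simps)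
    ultimately show "((\<lambda>y. ln (s y) + y^2 - \<alpha> * y) has_real_derivative 0) (at x within I)"
      by (simp add: has_field_derivative_at_within)
  qed
  then obtain \<beta> where be: "\<And>x. x \<in> I \<Longrightarrow> ln (s x) + x^2 - \<alpha> * x = \<beta>" by blast
  show ?thesis
    by (intro exI[of _ \<alpha>] exI[of _ \<beta>] ballI conjI) (use al be in \<open>fastforce simp: algebra_simps\<close>)+
qed

lemma s_pos: assumes z: "z > 0" shows "s z > 0"
proof (rule ccontr)
  assume "\<not> s z > 0"
  then have sz: "s z = 0" using s_nonneg[of z] by linarith
  obtain x0 where x0: "x0 > 0" "s x0 > 0" using nz unfolding s_def by blast
  have cont_on: "\<And>p q. 0 < p \<Longrightarrow> continuous_on {p..q} s"
    by (rule continuous_on_subset[OF cont_s]) auto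
  show False
  proof (cases "x0 < z")
    case True
    define T where "T = {y \<in> {x0..z}. s y = 0}"
    have "closed T" unfolding T_def by (rule continuous_closed_preimage_constant[OF cont_on[OF x0(1)]]) auto
    moreover have "bounded T" unfolding T_def by (rule bounded_subset[of "{x0..z}"]) auto
    ultimately have cT: "compact T" by (simp add: compact_eq_bounded_closed)
    have ne: "T \<noteq> {}" using True sz unfolding T_def by auto
    obtain b where b: "b \<in> T" "\<And>t. t \<in> T \<Longrightarrow> b \<le> t" using compact_attains_inf[OF cT ne] by blast
    have b1: "x0 \<le> b" "b \<le> z" "s b = 0" using b(1) unfolding T_def by auto
    have "b \<noteq> x0" using b1 x0 by auto
    then have bx: "b > x0" "s b = 0" using b1 by auto
    have pos: "\<And>y. y \<in> {x0<..<b} \<Longrightarrow> s y > 0"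
    proof -
      fix y assume y: "y \<in> {x0<..<b}"
      show "s y > 0"
      proof (rule ccontr)
        assume "\<not> s y > 0"
        then have "s y = 0" using s_nonneg[of y] by linarith
        then have "y \<in> T" using y b(1) unfolding T_def by auto
        then show False using b(2)[of y] y by simp
      qed
    qed
    obtain \<alpha> \<beta> where ab: "\<forall>y\<in>{x0<..<b}. s1 y / s y = \<alpha> - 2 * y \<and> ln (s y) = \<beta> + \<alpha> * y - y^2"
      using Q[of "{x0<..<b}"] pos x0 by (force simp: subset_iff)
    have ev: "eventually (\<lambda>y. exp (\<beta> + \<alpha> * y - y^2) = s y) (at_left b)"
      unfolding eventually_at_left_field
    proof (intro exI[of _ x0] conjI allI impI)
      show "x0 < b" using bx by simp
      fix y assume "x0 < y" "y < b"
      then have "y \<in> {x0<..<b}" by simp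
      then show "exp (\<beta> + \<alpha> * y - y^2) = s y" using ab pos by (metis exp_ln)
    qed
    have l1: "((\<lambda>y. exp (\<beta> + \<alpha> * y - y^2)) \<longlongrightarrow> exp (\<beta> + \<alpha> * b - b^2)) (at_left b)"
      by (intro tendsto_intros)
    then have l2: "(s \<longlongrightarrow> exp (\<beta> + \<alpha> * b - b^2)) (at_left b)"
      using tendsto_cong[OF ev] by blast
    have "isCont s b" using ds[of b] bx x0 by (intro DERIV_isCont) auto
    then have l3: "(s \<longlongrightarrow> s b) (at_left b)" by (simp add: isCont_def filterlim_at_split)
    have "s b = exp (\<beta> + \<alpha> * b - b^2)" using tendsto_unique[OF _ l3 l2] by simp
    then show False using bx by simp
  next
    case False
    then have zx: "z < x0" using sz x0 by (cases "z = x0") auto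
    define T where "T = {y \<in> {z..x0}. s y = 0}"
    have "closed T" unfolding T_def by (rule continuous_closed_preimage_constant[OF cont_on[OF z]]) auto
    moreover have "bounded T" unfolding T_def by (rule bounded_subset[of "{z..x0}"]) auto
    ultimately have cT: "compact T" by (simp add: compact_eq_bounded_closed)
    have "z \<in> T" using zx sz unfolding T_def by simp
    then have ne: "T \<noteq> {}" by blast
    obtain b where b: "b \<in> T" "\<And>t. t \<in> T \<Longrightarrow> t \<le> b" using compact_attains_sup[OF cT ne] by blast
    have b1: "z \<le> b" "b \<le> x0" "s b = 0" using b(1) unfolding T_def by auto
    have "b \<noteq> x0" using b1 x0 by auto
    then have bx: "b < x0" "s b = 0" "b > 0" using b1 z by auto
    have pos: "\<And>y. y \<in> {b<..<x0} \<Longrightarrow> s y > 0"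
    proof -
      fix y assume y: "y \<in> {b<..<x0}"
      show "s y > 0"
      proof (rule ccontr)
        assume "\<not> s y > 0"
        then have "s y = 0" using s_nonneg[of y] by linarith
        then have "y \<in> T" using y b(1) unfolding T_def by auto
        then show False using b(2)[of y] y by simp
      qed
    qed
    obtain \<alpha> \<beta> where ab: "\<forall>y\<in>{b<..<x0}. s1 y / s y = \<alpha> - 2 * y \<and> ln (s y) = \<beta> + \<alpha> * y - y^2"
      using Q[of "{b<..<x0}"] pos bx by (force simp: subset_iff)
    have ev: "eventually (\<lambda>y. exp (\<beta> + \<alpha> * y - y^2) = s y) (at_right b)"
      unfolding eventually_at_right_field
    proof (intro exI[of _ x0] conjI allI impI)
      show "b < x0" using bx by simp
      fix y assume "b < y" "y < x0"
      then have "y \<in> {b<..<x0}" by simp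
      then show "exp (\<beta> + \<alpha> * y - y^2) = s y" using ab pos by (metis exp_ln)
    qed
    have l1: "((\<lambda>y. exp (\<beta> + \<alpha> * y - y^2)) \<longlongrightarrow> exp (\<beta> + \<alpha> * b - b^2)) (at_right b)"
      by (intro tendsto_intros)
    then have l2: "(s \<longlongrightarrow> exp (\<beta> + \<alpha> * b - b^2)) (at_right b)"
      using tendsto_cong[OF ev] by blast
    have "isCont s b" using ds[of b] bx by (intro DERIV_isCont) auto
    then have l3: "(s \<longlongrightarrow> s b) (at_right b)" by (simp add: isCont_def filterlim_at_split)
    have "s b = exp (\<beta> + \<alpha> * b - b^2)" using tendsto_unique[OF _ l3 l2] by simp
    then show False using bx by simp
  qed
qed

lemma main: "\<exists>A B c. A^2 + B^2 = 1 \<and> (\<forall>x>0.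
   a x = A * (exp ((\<omega>+1)/2) * exp (-(1/2) * (x+c)^2)) \<and> b x = B * (exp ((\<omega>+1)/2) * exp (-(1/2) * (x+c)^2)))"
proof -
  obtain \<alpha> \<beta> where ab: "\<forall>x\<in>{0<..}. s1 x / s x = \<alpha> - 2 * x \<and> ln (s x) = \<beta> + \<alpha> * x - x^2"
    using Q[of "{0<..}"] s_pos by auto
  define c where "c = - \<alpha> / 2"
  define G where "G x = exp ((\<omega>+1)/2) * exp (-(1/2) * (x+c)^2)" for x
  have one: "(1::real) > 0" by simp
  have "(s1 1 / s 1)^2 = 4 * (\<omega> + 1 - ln (s 1))"
  proof -
    have "s1 1 ^ 2 = 4 * s 1 * F (s 1)" using s1_sq[OF one] P_F[OF one] by simp
    then have "s1 1 ^ 2 = 4 * (s 1)^2 * (\<omega> + 1 - ln (s 1))" by (simp add: F_def power2_eq_square algebra_simps)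
    then show ?thesis using s_pos[OF one] by (simp add: power_divide)
  qed
  then have "(\<alpha> - 2)^2 = 4 * (\<omega> + 1 - (\<beta> + \<alpha> - 1))" using ab by simp
  then have be: "\<beta> = \<omega> + 1 - \<alpha>^2 / 4" by (simp add: power2_eq_square algebra_simps)
  have lns: "ln (s x) = \<omega> + 1 - (x + c)^2" if "x > 0" for x
    using ab that be by (simp add: c_def power2_eq_square algebra_simps)
  have Gpos: "G x > 0" for x by (simp add: G_def)
  have Gsq: "G x ^ 2 = s x" if "x > 0" for x
  proof -
    have "G x ^ 2 = exp (\<omega> + 1 - (x + c)^2)"
      unfolding G_def power_mult_distrib exp_add[symmetric] power2_eq_square[of "exp _"] by (simp add: algebra_simps)
    also have "\<dots> = s x" using lns[OF that] s_pos[OF that] by (metis exp_ln)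
    finally show ?thesis .
  qed
  have dG: "(G has_real_derivative (-(x+c)) * G x) (at x)" for x
    unfolding G_def by (rule derivative_eq_intros refl)+ (simp add: algebra_simps)
  have ratio: "s1 x / (2 * s x) = -(x+c)" if "x > 0" for x
  proof -
    have "s1 x / s x = \<alpha> - 2 * x" using ab that by simp
    then have "s1 x / (2 * s x) = (\<alpha> - 2 * x) / 2" by (metis divide_divide_eq_left mult.commute)
    then show ?thesis by (simp add: c_def field_simps)
  qed
  have a1e: "a1 x = -(x+c) * a x" if x: "x > 0" for x
  proof -
    have J0: "a x * b1 x = b x * a1 x" using J_eq[OF x] J0_zero by (simp add: J_def)
    have "s x * a1 x = a x * (s1 x / 2)" unfolding s_def s1_def
      using J0 by (simp add: power2_eq_square algebra_simps)
    then have "a1 x = (s1 x / (2 * s x)) * a x" using s_pos[OF x] by (simp add: field_simps)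
    then show ?thesis using ratio[OF x] by simp
  qed
  have b1e: "b1 x = -(x+c) * b x" if x: "x > 0" for x
  proof -
    have J0: "a x * b1 x = b x * a1 x" using J_eq[OF x] J0_zero by (simp add: J_def)
    have "s x * b1 x = b x * (s1 x / 2)" unfolding s_def s1_def
      using J0 by (simp add: power2_eq_square algebra_simps)
    then have "b1 x = (s1 x / (2 * s x)) * b x" using s_pos[OF x] by (simp add: field_simps)
    then show ?thesis using ratio[OF x] by simp
  qed
  have "\<exists>A. \<forall>x\<in>{0<..}. a x / G x = A"
  proof (rule has_field_derivative_zero_constant)
    fix x :: real assume "x \<in> {0<..}"
    then have x: "x > 0" by simp
    have D: "((\<lambda>y. a y / G y) has_real_derivative (a1 x * G x - a x * ((-(x+c)) * G x)) / (G x)^2) (at x)"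
      using DERIV_divide[OF da[OF x] dG] Gpos[of x] by (simp add: power2_eq_square)
    have Z: "(a1 x * G x - a x * ((-(x+c)) * G x)) / (G x)^2 = 0" by (simp add: a1e[OF x] algebra_simps)
    have "((\<lambda>y. a y / G y) has_real_derivative 0) (at x)" using D unfolding Z .
    then show "((\<lambda>y. a y / G y) has_real_derivative 0) (at x within {0<..})"
      using has_field_derivative_at_within by blast
  qed simp
  then obtain A where A: "\<And>x. x > 0 \<Longrightarrow> a x / G x = A" by auto
  have "\<exists>B. \<forall>x\<in>{0<..}. b x / G x = B"
  proof (rule has_field_derivative_zero_constant)
    fix x :: real assume "x \<in> {0<..}"
    then have x: "x > 0" by simp
    have D: "((\<lambda>y. b y / G y) has_real_derivative (b1 x * G x - b x * ((-(x+c)) * G x)) / (G x)^2) (at x)"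
      using DERIV_divide[OF db[OF x] dG] Gpos[of x] by (simp add: power2_eq_square)
    have Z: "(b1 x * G x - b x * ((-(x+c)) * G x)) / (G x)^2 = 0" by (simp add: b1e[OF x] algebra_simps)
    have "((\<lambda>y. b y / G y) has_real_derivative 0) (at x)" using D unfolding Z .
    then show "((\<lambda>y. b y / G y) has_real_derivative 0) (at x within {0<..})"
      using has_field_derivative_at_within by blast
  qed simp
  then obtain B where B: "\<And>x. x > 0 \<Longrightarrow> b x / G x = B" by auto
  have aG: "a x = A * G x" if "x > 0" for x using A[OF that] Gpos[of x] by (simp add: field_simps)
  have bG: "b x = B * G x" if "x > 0" for x using B[OF that] Gpos[of x] by (simp add: field_simps)
  have "A^2 + B^2 = 1"
  proof -
    have "s 1 = (A^2 + B^2) * G 1 ^ 2" using aG[OF one] bG[OF one] by (simp add: s_def power_mult_distrib algebra_simps)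
    then show ?thesis using Gsq[OF one] s_pos[OF one] by simp
  qed
  then show ?thesis using aG bG unfolding G_def by blast
qed

end

lemma vd_Re: "(f has_vector_derivative f') F \<Longrightarrow> ((\<lambda>t. Re (f t)) has_real_derivative Re f') F"
proof -
  assume "(f has_vector_derivative f') F"
  then have "(f has_derivative (\<lambda>h. h *\<^sub>R f')) F" by (simp add: has_vector_derivative_def)
  then have "((\<lambda>t. Re (f t)) has_derivative (\<lambda>h. Re (h *\<^sub>R f'))) F" by (rule has_derivative_Re)
  moreover have "(\<lambda>h. Re (h *\<^sub>R f')) = (*) (Re f')" by (auto simp: fun_eq_iff)
  ultimately show ?thesis by (simp add: has_field_derivative_def)
qed

lemma vd_Im: "(f has_vector_derivative f') F \<Longrightarrow> ((\<lambda>t. Im (f t)) has_real_derivative Im f') F"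
proof -
  assume "(f has_vector_derivative f') F"
  then have "(f has_derivative (\<lambda>h. h *\<^sub>R f')) F" by (simp add: has_vector_derivative_def)
  then have "((\<lambda>t. Im (f t)) has_derivative (\<lambda>h. Im (h *\<^sub>R f'))) F" by (rule has_derivative_Im)
  moreover have "(\<lambda>h. Im (h *\<^sub>R f')) = (*) (Im f')" by (auto simp: fun_eq_iff)
  ultimately show ?thesis by (simp add: has_field_derivative_def)
qed

theorem lemma4p2:
  fixes \<omega> :: real and u :: "real \<Rightarrow> complex"
  assumes "W_pos u"
    and "C2_on {0<..} u"
    and "\<forall>x>0. - vector_derivative (\<lambda>s. vector_derivative u (at s)) (at x)
               + complex_of_real \<omega> * u x - u x * complex_of_real (ln ((cmod (u x))\<^sup>2)) = 0"
    and "\<exists>x>0. u x \<noteq> 0"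
  shows "\<exists>\<theta> c :: real. \<forall>x>0.
           u x = exp (\<i> * complex_of_real \<theta>) * complex_of_real (exp ((\<omega> + 1) / 2))
                 * complex_of_real (exp (- (1/2) * (x + c)\<^sup>2))"
proof -
  define U1 where "U1 t = vector_derivative u (at t)" for t
  define U2 where "U2 t = vector_derivative U1 (at t)" for t
  have du: "(u has_vector_derivative U1 x) (at x)" if "x > 0" for x
    using assms(2) that unfolding C2_on_def U1_def by (simp add: vector_derivative_works[symmetric])
  have dU1: "(U1 has_vector_derivative U2 x) (at x)" if "x > 0" for x
    using assms(2) that unfolding C2_on_def U1_def[abs_def] U2_def
    by (simp add: vector_derivative_works[symmetric])
  have ode: "U2 x = (complex_of_real (\<omega> - ln ((Re (u x))^2 + (Im (u x))^2))) * u x" if "x > 0" for x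
  proof -
    have "- U2 x + complex_of_real \<omega> * u x - u x * complex_of_real (ln ((cmod (u x))\<^sup>2)) = 0"
      using assms(3) that unfolding U2_def U1_def[abs_def] by blast
    then show ?thesis by (simp add: cmod_power2 algebra_simps)
  qed
  have intu: "set_integrable lborel {0<..} (\<lambda>x. (Re (u x))^2 + (Im (u x))^2)"
    using assms(1) unfolding W_pos_def H1_pos_def L2_pos_def by (simp add: cmod_power2)
  have nzu: "\<exists>x>0. (Re (u x))^2 + (Im (u x))^2 > 0"
  proof -
    obtain x where "x > 0" "u x \<noteq> 0" using assms(4) by blast
    then have "Re (u x) \<noteq> 0 \<or> Im (u x) \<noteq> 0" by (simp add: complex_eq_iff)
    then have "(Re (u x))^2 + (Im (u x))^2 > 0" by (simp add: sum_power2_gt_zero_iff)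
    then show ?thesis using \<open>x > 0\<close> by blast
  qed
  interpret S: sol "\<lambda>t. Re (u t)" "\<lambda>t. Im (u t)" "\<lambda>t. Re (U1 t)" "\<lambda>t. Im (U1 t)"
    "\<lambda>t. Re (U2 t)" "\<lambda>t. Im (U2 t)" \<omega>
  proof
    show "\<And>x. 0 < x \<Longrightarrow> ((\<lambda>t. Re (u t)) has_real_derivative Re (U1 x)) (at x)" by (rule vd_Re[OF du])
    show "\<And>x. 0 < x \<Longrightarrow> ((\<lambda>t. Im (u t)) has_real_derivative Im (U1 x)) (at x)" by (rule vd_Im[OF du])
    show "\<And>x. 0 < x \<Longrightarrow> ((\<lambda>t. Re (U1 t)) has_real_derivative Re (U2 x)) (at x)" by (rule vd_Re[OF dU1])
    show "\<And>x. 0 < x \<Longrightarrow> ((\<lambda>t. Im (U1 t)) has_real_derivative Im (U2 x)) (at x)" by (rule vd_Im[OF dU1])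
    show "\<And>x. 0 < x \<Longrightarrow> Re (U2 x) = (\<omega> - ln ((Re (u x))\<^sup>2 + (Im (u x))\<^sup>2)) * Re (u x)"
      by (simp add: ode)
    show "\<And>x. 0 < x \<Longrightarrow> Im (U2 x) = (\<omega> - ln ((Re (u x))\<^sup>2 + (Im (u x))\<^sup>2)) * Im (u x)"
      by (simp add: ode)
    show "set_integrable lborel {0<..} (\<lambda>x. (Re (u x))\<^sup>2 + (Im (u x))\<^sup>2)" by (rule intu)
    show "\<exists>x>0. 0 < (Re (u x))\<^sup>2 + (Im (u x))\<^sup>2" by (rule nzu)
  qed
  obtain A B c where ABc: "A^2 + B^2 = 1" "\<And>x. x > 0 \<Longrightarrow>
     Re (u x) = A * (exp ((\<omega>+1)/2) * exp (-(1/2) * (x+c)^2)) \<and> Im (u x) = B * (exp ((\<omega>+1)/2) * exp (-(1/2) * (x+c)^2))"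
    using S.main by blast
  define z where "z = Complex A B"
  have cz: "cmod z = 1" using ABc(1) by (simp add: z_def cmod_def)
  then have z0: "z \<noteq> 0" by auto
  have ez: "exp (\<i> * complex_of_real (Arg z)) = z"
    using cis_Arg[OF z0] cz by (simp add: cis_conv_exp sgn_div_norm)
  have "\<forall>x>0. u x = exp (\<i> * complex_of_real (Arg z)) * complex_of_real (exp ((\<omega> + 1) / 2))
                 * complex_of_real (exp (- (1/2) * (x + c)\<^sup>2))"
  proof (intro allI impI)
    fix x :: real assume x: "x > 0"
    show "u x = exp (\<i> * complex_of_real (Arg z)) * complex_of_real (exp ((\<omega> + 1) / 2))
                 * complex_of_real (exp (- (1/2) * (x + c)\<^sup>2))"
      unfolding ez using ABc(2)[OF x] by (simp add: complex_eq_iff z_def)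
  qed
  then show ?thesis by blast
qed

end
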